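(* Assume the steady state is isotropic (King model, or polytrope with $L_0=0=l$), so that $\mathrm{supp}\,\rho_0=[0,R_0]$. Suppose there are $S,c>0$ with $[0,S]\subset[0,R_0]$ and $\rho_0\ge c$ on $[0,S]$. Then for all $(E,L)\in\mathring\Omega_0^{EL}$ with $r_+(E,L)\le S$ and all $r\in[r_-(E,L),r_+(E,L)]$, $$E-\Psi_L(r)\ge\frac{2\pi}{3}c\,\frac{(r_+(E,L)-r)(r-r_-(E,L))(r+r_+(E,L)+r_-(E,L))}{r},$$ and consequently $T(E,L)\le\sqrt{3\pi/c}$ for all such $(E,L)$.
   Context: Spherically symmetric gravitational Vlasov–Poisson system. Let $(f_0,\rho_0,U_0)$ be a compactly supported steady state of finite mass of the form $f_0(x,v)=\varphi(E,L)$, $E=\tfrac12|v|^2+U_0(x)$, $L=|x\times v|^2$, where $U_0$ is spherically symmetric, $\Delta U_0=4\pi\rho_0$, $\rho_0(x)=\int f_0(x,v)dv$, $U_0(x)\to0$ as $|x|\to\infty$, and $\varphi$ is either a polytrope $\varphi(E,L)=(E_0-E)_+^k(L-L_0)_+^l$ with $E_0<0$ and either ($L_0>0$, $k>0$, $l>-1$, $k<l+\tfrac72$, $k+l+\tfrac12\ge0$) or ($L_0=0=l$, $0<k<\tfrac72$, convention $0^0=1$), or the King model $\varphi(E)=(e^{E_0-E}-1)_+$, $E_0<0$; here $t_+^k=t^k$ for $t>0$ and $0$ otherwise. $R_0$ is the radius of the spatial support. Let $\Omega_0=\{f_0>0\}$, $\Omega_0^{EL}=\{(E(x,v),L(x,v)):(x,v)\in\Omega_0\}$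 with interior $\mathring\Omega_0^{EL}$. Effective potential $\Psi_L(r)=U_0(r)+\frac{L}{2r^2}$; it has a unique minimizer $r_L>0$, and for $\Psi_L(r_L)<E<0$ the equation $\Psi_L(r)=E$ has exactly two solutions $r_-(E,L)<r_L<r_+(E,L)$. Period function $T(E,L)=2\int_{r_-(E,L)}^{r_+(E,L)}\frac{dr}{\sqrt{2E-2\Psi_L(r)}}$. *)

theory Defs
  imports "HOL-Analysis.Analysis" "HOL-Analysis.Cross3"
begin

definition pos_part :: "real \<Rightarrow> real" where
  "pos_part t = (if t > 0 then t else 0)"

definition king :: "real \<Rightarrow> real \<Rightarrow> real" where
  "king E0 E = pos_part (exp (E0 - E) - 1)"

text \<open>Polytrope with L0 = 0 = l: (E0-E)_+^k * (L)_+^0 with 0^0 = 1, i.e. (E0-E)_+^k.\<close>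
definition polytrope_iso :: "real \<Rightarrow> real \<Rightarrow> real \<Rightarrow> real" where
  "polytrope_iso E0 k E = (if E0 - E > 0 then (E0 - E) powr k else 0)"

definition energy :: "(real \<Rightarrow> real) \<Rightarrow> real^3 \<Rightarrow> real^3 \<Rightarrow> real" where
  "energy U0 x v = (norm v)\<^sup>2 / 2 + U0 (norm x)"

definition angmom :: "real^3 \<Rightarrow> real^3 \<Rightarrow> real" where
  "angmom x v = (norm (cross3 x v))\<^sup>2"

text \<open>Isotropic steady state f0(x,v) = phi(E), with radial profiles U0, rho0:
  rho0(x) = integral of f0(x,v) dv; spherically symmetric Poisson equation
  Delta U0 = 4 pi rho0 in its radial (integrated) form; U0 -> 0 at infinity;
  f0 compactly supported and of finite mass.\<close>
definition isotropic_steady_state ::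
  "(real \<Rightarrow> real) \<Rightarrow> (real \<Rightarrow> real) \<Rightarrow> (real \<Rightarrow> real) \<Rightarrow> bool" where
  "isotropic_steady_state phi U0 rho0 \<longleftrightarrow>
     (\<forall>x::real^3. (\<lambda>v::real^3. phi (energy U0 x v)) integrable_on UNIV \<and>
        rho0 (norm x) = integral UNIV (\<lambda>v::real^3. phi (energy U0 x v))) \<and>
     continuous_on {0..} U0 \<and>
     (\<forall>r>0. (U0 has_real_derivative
        (4 * pi / r\<^sup>2 * integral {0..r} (\<lambda>s. s\<^sup>2 * rho0 s))) (at r)) \<and>
     (U0 \<longlongrightarrow> 0) at_top \<and>
     bounded {p :: (real^3) \<times> (real^3). phi (energy U0 (fst p) (snd p)) > 0} \<and>
     (\<lambda>x::real^3. rho0 (norm x)) integrable_on UNIV"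

definition spatial_radius :: "(real \<Rightarrow> real) \<Rightarrow> real" where
  "spatial_radius rho0 = Sup {r. r \<ge> 0 \<and> rho0 r \<noteq> 0}"

definition OmegaEL :: "(real \<Rightarrow> real) \<Rightarrow> (real \<Rightarrow> real) \<Rightarrow> (real \<times> real) set" where
  "OmegaEL phi U0 = {(energy U0 x v, angmom x v) | x v. phi (energy U0 x v) > 0}"

definition Psi :: "(real \<Rightarrow> real) \<Rightarrow> real \<Rightarrow> real \<Rightarrow> real" where
  "Psi U0 L r = U0 r + L / (2 * r\<^sup>2)"

definition r_L :: "(real \<Rightarrow> real) \<Rightarrow> real \<Rightarrow> real" where
  "r_L U0 L = (THE r. r > 0 \<and> (\<forall>s>0. Psi U0 L r \<le> Psi U0 L s))"

definition r_minus :: "(real \<Rightarrow> real) \<Rightarrow> real \<Rightarrow> real \<Rightarrow> real" where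
  "r_minus U0 E L = (THE r. 0 < r \<and> r < r_L U0 L \<and> Psi U0 L r = E)"

definition r_plus :: "(real \<Rightarrow> real) \<Rightarrow> real \<Rightarrow> real \<Rightarrow> real" where
  "r_plus U0 E L = (THE r. r_L U0 L < r \<and> Psi U0 L r = E)"

definition period_integrand :: "(real \<Rightarrow> real) \<Rightarrow> real \<Rightarrow> real \<Rightarrow> real \<Rightarrow> real" where
  "period_integrand U0 E L r = 1 / sqrt (2 * E - 2 * Psi U0 L r)"

definition period :: "(real \<Rightarrow> real) \<Rightarrow> real \<Rightarrow> real \<Rightarrow> real" where
  "period U0 E L = 2 * integral {r_minus U0 E L .. r_plus U0 E L} (period_integrand U0 E L)"

end

theory Submission
  imports Defs
begin


locale ss =
  fixes phi U0 rho0 :: "real \<Rightarrow> real" and E0 k S c :: real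
  assumes E0: "E0 < 0"
    and ansatz: "phi = king E0 \<or> (0 < k \<and> k < 7/2 \<and> phi = polytrope_iso E0 k)"
    and steady: "isotropic_steady_state phi U0 rho0"
    and S: "S > 0" and c: "c > 0"
    and rho_lb: "\<forall>r\<in>{0..S}. rho0 r \<ge> c"
begin

lemma phi_nonneg: "phi E \<ge> 0"
  using ansatz by (auto simp: king_def pos_part_def polytrope_iso_def)

lemma phi_anti: "E \<le> E' \<Longrightarrow> phi E' \<le> phi E"
  using ansatz by (auto simp: king_def pos_part_def polytrope_iso_def intro!: powr_mono2)

lemma phi_pos: "phi E > 0 \<Longrightarrow> E < E0"
  using ansatz by (auto simp: king_def pos_part_def polytrope_iso_def split: if_splits)

lemma st_int: "(\<lambda>v::real^3. phi (energy U0 x v)) integrable_on UNIV"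
  and st_rho: "rho0 (norm x) = integral UNIV (\<lambda>v::real^3. phi (energy U0 x v))"
  and U0_cont: "continuous_on {0..} U0"
  and U0_deriv: "r > 0 \<Longrightarrow> (U0 has_real_derivative
        (4 * pi / r\<^sup>2 * integral {0..r} (\<lambda>s. s\<^sup>2 * rho0 s))) (at r)"
  and U0_lim: "(U0 \<longlongrightarrow> 0) at_top"
  using steady unfolding isotropic_steady_state_def by auto

lemma rho_eq: "s \<ge> 0 \<Longrightarrow> rho0 s = integral UNIV (\<lambda>v::real^3. phi ((norm v)\<^sup>2/2 + U0 s))"
  and rho_int: "s \<ge> 0 \<Longrightarrow> (\<lambda>v::real^3. phi ((norm v)\<^sup>2/2 + U0 s)) integrable_on UNIV"
proof -
  assume "s \<ge> 0"
  then obtain x :: "real^3" where x: "norm x = s" using vector_choose_size by blast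
  show "rho0 s = integral UNIV (\<lambda>v::real^3. phi ((norm v)\<^sup>2/2 + U0 s))"
    using st_rho[of x] x by (simp add: energy_def)
  show "(\<lambda>v::real^3. phi ((norm v)\<^sup>2/2 + U0 s)) integrable_on UNIV"
    using st_int[of x] x by (simp add: energy_def)
qed

lemma rho_nonneg: "s \<ge> 0 \<Longrightarrow> rho0 s \<ge> 0"
  using rho_eq rho_int phi_nonneg by (simp add: integral_nonneg)

lemma rho_anti: "s \<ge> 0 \<Longrightarrow> t \<ge> 0 \<Longrightarrow> U0 s \<le> U0 t \<Longrightarrow> rho0 t \<le> rho0 s"
  unfolding rho_eq by (intro integral_le rho_int) (auto intro: phi_anti)

lemma rho_integrable: assumes b: "b \<ge> 0" shows "(\<lambda>s. s\<^sup>2 * rho0 s) integrable_on {0..b}"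
proof -
  have cU: "continuous_on {0..b} U0" using U0_cont by (rule continuous_on_subset) auto
  obtain t1 where t1: "t1 \<in> {0..b}" "\<And>s. s \<in> {0..b} \<Longrightarrow> U0 t1 \<le> U0 s"
    using continuous_attains_inf[OF compact_Icc _ cU] b by auto
  obtain t2 where t2: "t2 \<in> {0..b}" "\<And>s. s \<in> {0..b} \<Longrightarrow> U0 s \<le> U0 t2"
    using continuous_attains_sup[OF compact_Icc _ cU] b by auto
  define cl where "cl u = max (U0 t1) (min (U0 t2) u)" for u
  have pre: "\<exists>t\<in>{0..b}. U0 t = cl u" for u
  proof (cases "t1 \<le> t2")
    case True
    have "continuous_on {t1..t2} U0" using cU t1 t2 by (rule_tac continuous_on_subset) auto
    then show ?thesis using IVT'[of U0 t1 "cl u" t2] True t1 t2 unfolding cl_def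
      by (fastforce simp: max_def min_def)
  next
    case False
    have "continuous_on {t2..t1} U0" using cU t1 t2 by (rule_tac continuous_on_subset) auto
    then show ?thesis using IVT2'[of U0 t1 "cl u" t2] False t1 t2 unfolding cl_def
      by (fastforce simp: max_def min_def)
  qed
  define g where "g u = - integral UNIV (\<lambda>v::real^3. phi ((norm v)\<^sup>2/2 + cl u))" for u
  have "mono g"
  proof
    fix u u' :: real assume "u \<le> u'"
    obtain t where t: "t \<in> {0..b}" "U0 t = cl u" using pre by blast
    obtain t' where t': "t' \<in> {0..b}" "U0 t' = cl u'" using pre by blast
    have "cl u \<le> cl u'" using \<open>u \<le> u'\<close> unfolding cl_def by auto
    then have "rho0 t' \<le> rho0 t" using t t' by (intro rho_anti) auto
    then show "g u \<le> g u'" unfolding g_def using t t' rho_eq[of t] rho_eq[of t'] by auto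
  qed
  then have gm: "g \<in> borel_measurable borel" by (rule borel_measurable_mono)
  have eq: "s\<^sup>2 * rho0 s = s\<^sup>2 * - g (U0 s)" if "s \<in> {0..b}" for s
  proof -
    have "cl (U0 s) = U0 s" using t1 t2 that unfolding cl_def by auto
    then show ?thesis unfolding g_def using rho_eq[of s] that by auto
  qed
  have Um: "U0 \<in> borel_measurable (lebesgue_on {0..b})"
    by (rule continuous_imp_measurable_on_sets_lebesgue[OF cU]) auto
  have M: "(\<lambda>s. s\<^sup>2 * - g (U0 s)) \<in> borel_measurable (lebesgue_on {0..b})"
  proof -
    have m1: "(\<lambda>x. g (U0 x)) \<in> borel_measurable (lebesgue_on {0..b})"
      using measurable_compose[OF Um gm] .
    have m2: "(\<lambda>x::real. x) \<in> borel_measurable (lebesgue_on {0..b})"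
      by (rule continuous_imp_measurable_on_sets_lebesgue[OF continuous_on_id]) auto
    show ?thesis using m1 m2 by measurable
  qed
  have G: "(\<lambda>s. b\<^sup>2 * rho0 t1) integrable_on {0..b}" by (rule integrable_const_ivl)
  have B: "\<bar>s\<^sup>2 * - g (U0 s)\<bar> \<le> b\<^sup>2 * rho0 t1" if "s \<in> {0..b}" for s
  proof -
    have "rho0 s \<le> rho0 t1" using t1 that by (intro rho_anti) auto
    moreover have "0 \<le> rho0 s" using that rho_nonneg by auto
    moreover have "s\<^sup>2 \<le> b\<^sup>2" using that by (auto intro: power_mono)
    ultimately show ?thesis using eq[OF that, symmetric]
      by (auto simp: abs_mult intro!: mult_mono)
  qed
  have Sl: "{0..b} \<in> sets lebesgue" by simp
  have "(\<lambda>s. s\<^sup>2 * - g (U0 s)) integrable_on {0..b}"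
    by (rule measurable_bounded_by_integrable_imp_integrable_real[OF M G B Sl])
  then show ?thesis using integrable_cong[of "{0..b}" "\<lambda>s. s\<^sup>2 * rho0 s" "\<lambda>s. s\<^sup>2 * - g (U0 s)", OF eq] by blast
qed

definition I :: "real \<Rightarrow> real" where "I r = integral {0..r} (\<lambda>s. s\<^sup>2 * rho0 s)"

lemma I_diff: assumes "0 \<le> x" "x \<le> y" shows "I y - I x = integral {x..y} (\<lambda>s. s\<^sup>2 * rho0 s)"
  using Henstock_Kurzweil_Integration.integral_combine[OF assms rho_integrable[of y]] assms unfolding I_def by auto

lemma I_mono: assumes "0 \<le> x" "x \<le> y" shows "I x \<le> I y"
proof -
  have "(\<lambda>s. s\<^sup>2 * rho0 s) integrable_on {x..y}"
    using rho_integrable[of y] assms by (rule_tac integrable_on_subinterval) auto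
  then have "0 \<le> integral {x..y} (\<lambda>s. s\<^sup>2 * rho0 s)"
    using assms by (intro integral_nonneg) (auto intro!: mult_nonneg_nonneg rho_nonneg)
  then show ?thesis using I_diff[OF assms] by simp
qed

lemma I_lb: assumes "0 \<le> x" "x \<le> y" "y \<le> S" shows "I y - I x \<ge> c * (y^3 - x^3) / 3"
proof -
  have i1: "(\<lambda>s. s\<^sup>2 * rho0 s) integrable_on {x..y}"
    using rho_integrable[of y] assms by (rule_tac integrable_on_subinterval) auto
  have hi: "((\<lambda>s. c * s\<^sup>2) has_integral (c * y^3/3 - c * x^3/3)) {x..y}"
    using assms(2)
    by (intro fundamental_theorem_of_calculus)
       (auto intro!: derivative_eq_intros simp: has_real_derivative_iff_has_vector_derivative[symmetric]
             power2_eq_square power3_eq_cube)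
  have "c * y^3/3 - c * x^3/3 \<le> integral {x..y} (\<lambda>s. s\<^sup>2 * rho0 s)"
  proof (rule has_integral_le[OF hi integrable_integral[OF i1]])
    fix s assume "s \<in> {x..y}"
    then have "c \<le> rho0 s" using rho_lb assms by auto
    then show "c * s\<^sup>2 \<le> s\<^sup>2 * rho0 s" using mult_right_mono[OF _ zero_le_power2[of s]] by (simp add: mult.commute)
  qed
  then show ?thesis using I_diff[of x y] assms by (simp add: field_simps)
qed

lemma I0: "I 0 = 0" unfolding I_def by simp

lemma I_pos: assumes "x > 0" shows "I x > 0"
proof -
  have "I (min x S) - I 0 \<ge> c * ((min x S)^3 - 0^3) / 3" using S assms by (intro I_lb) auto
  moreover have "c * (min x S)^3 / 3 > 0" using c S assms by auto
  moreover have "I (min x S) \<le> I x" using S assms by (intro I_mono) auto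
  ultimately show ?thesis by (simp add: I0)
qed

lemma Psi_deriv: assumes "r > 0"
  shows "(Psi U0 L has_real_derivative (4*pi*r*I r - L) / r^3) (at r)"
proof -
  have "(Psi U0 L has_real_derivative (4 * pi / r\<^sup>2 * I r + L * (- (2 * (2 * r)) / (2 * r\<^sup>2)^2))) (at r)"
    unfolding Psi_def[abs_def] I_def using assms
    by (auto intro!: derivative_eq_intros U0_deriv simp: power2_eq_square)
  moreover have "4 * pi / r\<^sup>2 * I r + L * (- (2 * (2 * r)) / (2 * r\<^sup>2)^2) = (4*pi*r*I r - L) / r^3"
    using assms by (simp add: field_simps power2_eq_square power3_eq_cube)
  ultimately show ?thesis by simp
qed

lemma Psi_cont: assumes "0 < a" shows "continuous_on {a..b} (Psi U0 L)"
  using assms by (intro continuous_at_imp_continuous_on ballI DERIV_isCont[OF Psi_deriv]) auto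



definition Q :: "real \<Rightarrow> real \<Rightarrow> real" where "Q L r = 4*pi*r*I r - L"

lemma Q_strict: assumes "0 < x" "x < y" shows "Q L x < Q L y"
proof -
  have "x * I x < y * I x" using I_pos[of x] assms by auto
  also have "\<dots> \<le> y * I y" using I_mono[of x y] assms by auto
  finally show ?thesis unfolding Q_def by simp
qed

definition aL :: "real \<Rightarrow> real" where "aL L = Inf {r. r > 0 \<and> Q L r \<ge> 0}"

lemma aL: assumes L: "L > 0"
  shows "aL L > 0" "\<And>r. 0 < r \<Longrightarrow> r < aL L \<Longrightarrow> Q L r < 0" "\<And>r. r > aL L \<Longrightarrow> Q L r > 0"
proof -
  define A where "A = {r. r > 0 \<and> Q L r \<ge> 0}"
  have IS: "I S > 0" using I_pos S by auto
  define r0 where "r0 = max S (L / (4*pi*I S))"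
  have "r0 \<in> A"
  proof -
    have "r0 > 0" using S unfolding r0_def by auto
    have "I S \<le> I r0" using S unfolding r0_def by (intro I_mono) auto
    have "L \<le> 4*pi*r0*I S"
      using IS unfolding r0_def by (auto simp: field_simps max_def)
    also have "\<dots> \<le> 4*pi*r0*I r0" using \<open>I S \<le> I r0\<close> \<open>r0 > 0\<close> by auto
    finally show ?thesis using \<open>r0 > 0\<close> unfolding A_def Q_def by auto
  qed
  define d where "d = min S (L / (8*pi*I S))"
  have d0: "d > 0" using S L IS unfolding d_def by auto
  have small: "Q L r < 0" if "0 < r" "r \<le> d" for r
  proof -
    have "I r \<le> I S" using that S unfolding d_def by (intro I_mono) auto
    then have "4*pi*r*I r \<le> 4*pi*d*I S"
      using that I_pos[of r] by (intro mult_mono) auto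
    also have "\<dots> \<le> L/2" using IS unfolding d_def by (auto simp: field_simps min_def)
    finally show ?thesis unfolding Q_def using L by auto
  qed
  have bdd: "bdd_below A" unfolding A_def by (rule bdd_belowI[of _ 0]) auto
  have lb: "d \<le> aL L" unfolding aL_def A_def[symmetric]
  proof (rule cInf_greatest)
    show "A \<noteq> {}" using \<open>r0 \<in> A\<close> by auto
    fix x assume "x \<in> A" then show "d \<le> x" using small[of x] unfolding A_def by force
  qed
  then show "aL L > 0" using d0 by auto
  show "Q L r < 0" if "0 < r" "r < aL L" for r
  proof (rule ccontr)
    assume "\<not> Q L r < 0"
    then have "r \<in> A" using that unfolding A_def by auto
    then have "aL L \<le> r" unfolding aL_def A_def[symmetric] using bdd by (rule cInf_lower)
    then show False using that by auto
  qed
  show "Q L r > 0" if "r > aL L" for r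
  proof -
    have "Inf A < r" using that unfolding aL_def A_def[symmetric] .
    moreover have "A \<noteq> {}" using \<open>r0 \<in> A\<close> by blast
    ultimately have "\<exists>r'\<in>A. r' < r" using cInf_lessD by blast
    then obtain r' where "r' \<in> A" "r' < r" by blast
    then show ?thesis using Q_strict[of r' r L] unfolding A_def by auto
  qed
qed

lemma Psi_dec: assumes L: "L > 0" and "0 < x" "x < y" "y \<le> aL L" shows "Psi U0 L y < Psi U0 L x"
proof -
  have dd: "\<And>t. x \<le> t \<Longrightarrow> t \<le> y \<Longrightarrow> (Psi U0 L has_real_derivative (4*pi*t*I t - L)/t^3) (at t)"
    using assms by (intro Psi_deriv) auto
  have "\<exists>z. x < z \<and> z < y \<and> Psi U0 L y - Psi U0 L x = (y - x) * ((4*pi*z*I z - L) / z^3)"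
    using MVT2[OF \<open>x < y\<close> dd] by simp
  then obtain z where z: "x < z" "z < y" "Psi U0 L y - Psi U0 L x = (y - x) * ((4*pi*z*I z - L) / z^3)"
    by blast
  have "Q L z < 0" using aL(2)[OF L, of z] z assms by auto
  then have "(4*pi*z*I z - L) / z^3 < 0" using z assms unfolding Q_def by (auto simp: divide_neg_pos)
  then have "(y - x) * ((4*pi*z*I z - L) / z^3) < 0" using assms by (intro mult_pos_neg) auto
  then show ?thesis using z(3) by linarith
qed



lemma Psi_inc: assumes L: "L > 0" and "aL L \<le> x" "x < y" shows "Psi U0 L x < Psi U0 L y"
proof -
  have x0: "x > 0" using aL(1)[OF L] assms(2) by linarith
  have dd: "\<And>t. x \<le> t \<Longrightarrow> t \<le> y \<Longrightarrow> (Psi U0 L has_real_derivative (4*pi*t*I t - L)/t^3) (at t)"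
    using x0 by (intro Psi_deriv) auto
  have "\<exists>z. x < z \<and> z < y \<and> Psi U0 L y - Psi U0 L x = (y - x) * ((4*pi*z*I z - L) / z^3)"
    using MVT2[OF \<open>x < y\<close> dd] by simp
  then obtain z where z: "x < z" "z < y" "Psi U0 L y - Psi U0 L x = (y - x) * ((4*pi*z*I z - L) / z^3)"
    by blast
  have "Q L z > 0" using aL(3)[OF L, of z] z assms(2) by linarith
  then have "(4*pi*z*I z - L) / z^3 > 0" using z x0 unfolding Q_def by (intro divide_pos_pos) auto
  then have "(y - x) * ((4*pi*z*I z - L) / z^3) > 0" using assms by (intro mult_pos_pos) auto
  then show ?thesis using z(3) by linarith
qed

lemma Psi_min: assumes L: "L > 0" "s > 0" "s \<noteq> aL L" shows "Psi U0 L (aL L) < Psi U0 L s"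
  using Psi_dec[OF L(1) \<open>s>0\<close>, of "aL L"] Psi_inc[OF L(1) order_refl, of s] assms by linarith

lemma rL_eq: assumes L: "L > 0" shows "r_L U0 L = aL L"
  unfolding r_L_def
proof (rule the_equality)
  have "Psi U0 L (aL L) \<le> Psi U0 L s" if "s > 0" for s
  proof (cases "s = aL L")
    case False
    then show ?thesis using Psi_min[OF L that False] by linarith
  qed simp
  then show "0 < aL L \<and> (\<forall>s>0. Psi U0 L (aL L) \<le> Psi U0 L s)"
    using aL(1)[OF L] by blast
  fix r assume r: "0 < r \<and> (\<forall>s>0. Psi U0 L r \<le> Psi U0 L s)"
  show "r = aL L"
  proof (rule ccontr)
    assume ne: "r \<noteq> aL L"
    have "Psi U0 L (aL L) < Psi U0 L r" using Psi_min[OF L _ ne] r by blast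
    moreover have "Psi U0 L r \<le> Psi U0 L (aL L)" using r aL(1)[OF L] by blast
    ultimately show False by linarith
  qed
qed



lemma interior_props: assumes "(E,L) \<in> interior (OmegaEL phi U0)"
  shows "L > 0" "E < E0" "\<exists>r0>0. Psi U0 L r0 < E"
proof -
  obtain e where e: "e > 0" "ball (E,L) e \<subseteq> OmegaEL phi U0" using assms mem_interior by blast
  have "dist (E,L) (E, L - e/2) < e" using e by (simp add: dist_Pair_Pair dist_real_def)
  then have "(E, L - e/2) \<in> OmegaEL phi U0" using e by auto
  then obtain x v where "L - e/2 = angmom x v" unfolding OmegaEL_def by auto
  moreover have "angmom x v \<ge> 0" unfolding angmom_def by simp
  ultimately show L: "L > 0" using e by linarith
  have "(E,L) \<in> OmegaEL phi U0" using assms interior_subset by blast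
  then show "E < E0" unfolding OmegaEL_def using phi_pos by auto
  have "dist (E,L) (E - e/2, L) < e" using e by (simp add: dist_Pair_Pair dist_real_def)
  then have "(E - e/2, L) \<in> OmegaEL phi U0" using e by auto
  then obtain x v where xv: "E - e/2 = energy U0 x v" "L = angmom x v" unfolding OmegaEL_def by auto
  have "x \<noteq> 0" using xv L unfolding angmom_def by auto
  then have r0: "norm x > 0" by simp
  have "L \<le> (norm x * norm v)\<^sup>2" using xv(2) norm_cross_dot[of x v] unfolding angmom_def
    by (smt (verit) zero_le_power2)
  then have "L / (2 * (norm x)\<^sup>2) \<le> (norm v)\<^sup>2 / 2" using r0
    by (simp add: divide_simps power_mult_distrib) (simp add: algebra_simps)
  then have "Psi U0 L (norm x) < E" using xv(1) e unfolding Psi_def energy_def by simp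
  then show "\<exists>r0>0. Psi U0 L r0 < E" using r0 by blast
qed

lemma r_minus: assumes L: "L > 0" and E: "Psi U0 L (aL L) < E"
  shows "0 < r_minus U0 E L" "r_minus U0 E L < aL L" "Psi U0 L (r_minus U0 E L) = E"
proof -
  define a where "a = aL L"
  have a0: "a > 0" using aL(1)[OF L] unfolding a_def .
  have cU: "continuous_on {0..a} U0" using U0_cont by (rule continuous_on_subset) auto
  obtain t where t: "t \<in> {0..a}" "\<And>s. s \<in> {0..a} \<Longrightarrow> U0 t \<le> U0 s"
    using continuous_attains_inf[OF compact_Icc _ cU] a0 by auto
  define M where "M = U0 t"
  define K where "K = \<bar>E - M\<bar> + 1"
  define r1 where "r1 = min (a/2) (min 1 (L/(2*K)))"
  have K0: "K > 0" unfolding K_def by auto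
  have r10: "r1 > 0" "r1 < a" "r1 \<le> 1" "r1 \<le> L/(2*K)" using a0 L K0 unfolding r1_def by auto
  have "r1^2 \<le> r1" using r10 by (simp add: power2_eq_square mult_left_le)
  then have "r1^2 \<le> L/(2*K)" using r10 by linarith
  then have "K \<le> L / (2 * r1^2)" using K0 r10 by (simp add: field_simps)
  moreover have "M \<le> U0 r1" unfolding M_def using t r10 by auto
  ultimately have "E \<le> Psi U0 L r1" unfolding Psi_def K_def by linarith
  moreover have "continuous_on {r1..a} (Psi U0 L)" using r10 by (intro Psi_cont)
  ultimately obtain r where r: "r1 \<le> r" "r \<le> a" "Psi U0 L r = E"
    using IVT2'[of "Psi U0 L" a E r1] E r10 unfolding a_def by auto
  have ra: "r < a" using r E unfolding a_def by (metis order.not_eq_order_implies_strict order_less_irrefl)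
  have ex: "\<exists>!r. 0 < r \<and> r < r_L U0 L \<and> Psi U0 L r = E"
  proof (rule ex1I[of _ r])
    show "0 < r \<and> r < r_L U0 L \<and> Psi U0 L r = E" using r ra r10 rL_eq[OF L] unfolding a_def by auto
    fix r' assume r': "0 < r' \<and> r' < r_L U0 L \<and> Psi U0 L r' = E"
    show "r' = r"
    proof (rule ccontr)
      assume "r' \<noteq> r"
      then consider "r' < r" | "r < r'" by linarith
      then show False
        using Psi_dec[OF L, of r' r] Psi_dec[OF L, of r r'] r' r ra r10 rL_eq[OF L]
        unfolding a_def by cases auto
    qed
  qed
  from theI'[OF ex] show "0 < r_minus U0 E L" "r_minus U0 E L < aL L" "Psi U0 L (r_minus U0 E L) = E"
    unfolding r_minus_def rL_eq[OF L] by auto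
qed

lemma Psi_lim: "(Psi U0 L \<longlongrightarrow> 0) at_top"
proof -
  have "filterlim (\<lambda>r::real. 2 * r\<^sup>2) at_top at_top"
    by (intro filterlim_tendsto_pos_mult_at_top[OF tendsto_const] filterlim_pow_at_top filterlim_ident) auto
  then have "((\<lambda>r::real. L / (2 * r\<^sup>2)) \<longlongrightarrow> 0) at_top"
    by (intro tendsto_divide_0[OF tendsto_const] filterlim_at_top_imp_at_infinity)
  then show ?thesis unfolding Psi_def[abs_def] using tendsto_add[OF U0_lim] by fastforce
qed

lemma r_plus: assumes L: "L > 0" and E: "Psi U0 L (aL L) < E" and E0: "E < 0"
  shows "aL L < r_plus U0 E L" "Psi U0 L (r_plus U0 E L) = E"
proof -
  define a where "a = aL L"
  have a0: "a > 0" using aL(1)[OF L] unfolding a_def .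
  have "eventually (\<lambda>r. E < Psi U0 L r) at_top" using order_tendstoD(1)[OF Psi_lim E0] .
  then obtain N where N: "\<And>r. r \<ge> N \<Longrightarrow> E < Psi U0 L r" unfolding eventually_at_top_linorder by blast
  define R where "R = max N (a + 1)"
  have "E < Psi U0 L R" using N unfolding R_def by auto
  moreover have "continuous_on {a..R} (Psi U0 L)" using a0 by (intro Psi_cont)
  moreover have "a \<le> R" unfolding R_def by auto
  ultimately have "\<exists>r. a \<le> r \<and> r \<le> R \<and> Psi U0 L r = E"
    using E unfolding a_def by (intro IVT') auto
  then obtain r where r: "a \<le> r" "r \<le> R" "Psi U0 L r = E" by blast
  have ra: "a < r" using r E unfolding a_def by (metis order.not_eq_order_implies_strict order_less_irrefl)
  have ex: "\<exists>!r. r_L U0 L < r \<and> Psi U0 L r = E"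
  proof (rule ex1I[of _ r])
    show "r_L U0 L < r \<and> Psi U0 L r = E" using r ra rL_eq[OF L] unfolding a_def by auto
    fix r' assume r': "r_L U0 L < r' \<and> Psi U0 L r' = E"
    show "r' = r"
    proof (rule ccontr)
      assume "r' \<noteq> r"
      then consider "r' < r" | "r < r'" by linarith
      then show False
        using Psi_inc[OF L, of r' r] Psi_inc[OF L, of r r'] r' r ra rL_eq[OF L]
        unfolding a_def by cases auto
    qed
  qed
  from theI'[OF ex] show "aL L < r_plus U0 E L" "Psi U0 L (r_plus U0 E L) = E"
    unfolding r_plus_def rL_eq[OF L] by auto
qed




lemma main_ineq:
  assumes L: "L > 0" and rm: "0 < rm" "rm < rp" "rp \<le> S"
    and Em: "Psi U0 L rm = E" and Ep: "Psi U0 L rp = E" and r: "r \<in> {rm..rp}"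
  shows "E - Psi U0 L r \<ge> 2 * pi / 3 * c * ((rp - r) * (r - rm) * (r + rp + rm)) / r"
proof -
  define \<sigma> where "\<sigma> = rp + rm"
  define p where "p = rp * rm"
  define R2 where "R2 x = 2*pi/3*c*(- (x^2) + (\<sigma>^2 - p) - p*\<sigma>/x)" for x
  define RD where "RD x = 2*pi/3*c*(- 2*x + p*\<sigma>/x^2)" for x
  define D where "D x = E - Psi U0 L x - R2 x" for x
  define D' where "D' x = 0 - (4*pi*x*I x - L) / x^3 - RD x" for x
  have Rf: "2 * pi / 3 * c * ((rp - x) * (x - rm) * (x + rp + rm)) / x = R2 x" if "x > 0" for x
    using that unfolding R2_def \<sigma>_def p_def by (simp add: field_simps power2_eq_square)
  have dR: "(R2 has_real_derivative RD x) (at x)" if "x > 0" for x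
    using that unfolding R2_def[abs_def] RD_def
    by (auto intro!: derivative_eq_intros simp: field_simps power2_eq_square)
  have dD: "(D has_real_derivative D' x) (at x)" if "x > 0" for x
    unfolding D_def[abs_def] D'_def
    using DERIV_diff[OF DERIV_diff[OF DERIV_const Psi_deriv[OF that]] dR[OF that]] by simp
  have N: "x^3 * D' x = L - 4*pi*(x*(I x - c*x^3/3 + c*p*\<sigma>/6))" if "x > 0" for x
    using that unfolding D'_def RD_def by (simp add: field_simps power2_eq_square power3_eq_cube)
  have pos: "p * \<sigma> > 0" unfolding p_def \<sigma>_def using rm by auto
  have Nmono: "y^3 * D' y \<le> x^3 * D' x" if "rm \<le> x" "x \<le> y" "y \<le> rp" for x y
  proof -
    have Bx: "I x - c*x^3/3 + c*p*\<sigma>/6 > 0"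
    proof -
      have "I x - I 0 \<ge> c * (x^3 - 0^3) / 3" using that rm by (intro I_lb) auto
      moreover have "c*p*\<sigma>/6 > 0" using mult_pos_pos[OF c pos] by (simp add: mult.assoc)
      ultimately show ?thesis by (simp add: I0)
    qed
    have "I y - I x \<ge> c * (y^3 - x^3) / 3" using that rm by (intro I_lb) auto
    then have Bxy: "I x - c*x^3/3 + c*p*\<sigma>/6 \<le> I y - c*y^3/3 + c*p*\<sigma>/6" by (simp add: field_simps)
    have "x*(I x - c*x^3/3 + c*p*\<sigma>/6) \<le> y*(I x - c*x^3/3 + c*p*\<sigma>/6)"
      using Bx that by (intro mult_right_mono) auto
    also have "\<dots> \<le> y*(I y - c*y^3/3 + c*p*\<sigma>/6)"
      using Bxy that rm by (intro mult_left_mono) auto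
    finally have "x*(I x - c*x^3/3 + c*p*\<sigma>/6) \<le> y*(I y - c*y^3/3 + c*p*\<sigma>/6)" .
    then show ?thesis using N[of x] N[of y] that rm by simp
  qed
  have Drm: "D rm = 0" unfolding D_def using Em Rf[of rm] rm by (simp flip: Rf)
  have Drp: "D rp = 0" unfolding D_def using Ep Rf[of rp] rm by (simp flip: Rf)
  have "D r \<ge> 0"
  proof (rule ccontr)
    assume neg: "\<not> D r \<ge> 0"
    then have rin: "rm < r" "r < rp" using r Drm Drp by (auto simp: order.order_iff_strict)
    have d1: "\<And>t. rm \<le> t \<Longrightarrow> t \<le> r \<Longrightarrow> (D has_real_derivative D' t) (at t)"
      using rm by (intro dD) auto
    from MVT2[OF rin(1) d1] obtain z1 where z1: "rm < z1" "z1 < r" "D r - D rm = (r - rm) * D' z1"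
      by blast
    have d2: "\<And>t. r \<le> t \<Longrightarrow> t \<le> rp \<Longrightarrow> (D has_real_derivative D' t) (at t)"
      using rm rin by (intro dD) auto
    from MVT2[OF rin(2) d2] obtain z2 where z2: "r < z2" "z2 < rp" "D rp - D r = (rp - r) * D' z2"
      by blast
    have "(r - rm) * D' z1 < 0" using z1 Drm neg by linarith
    then have "D' z1 < 0" using rin by (simp add: mult_less_0_iff)
    then have n1: "z1^3 * D' z1 < 0" using z1 rm by (intro mult_pos_neg) auto
    have "(rp - r) * D' z2 > 0" using z2 Drp neg by linarith
    then have "D' z2 > 0" using rin by (simp add: zero_less_mult_iff)
    then have n2: "z2^3 * D' z2 > 0" using z2 rm rin by (intro mult_pos_pos) auto
    have "z2^3 * D' z2 \<le> z1^3 * D' z1" using z1 z2 by (intro Nmono) auto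
    then show False using n1 n2 by linarith
  qed
  then show ?thesis unfolding D_def using Rf[of r] r rm by simp
qed

lemma arcsin_integral:
  assumes "rm < rp"
  shows "((\<lambda>x. 1 / sqrt ((rp - x) * (x - rm))) has_integral pi) {rm..rp}"
proof -
  define w where "w = rp - rm"
  define \<sigma> where "\<sigma> = rp + rm"
  have w0: "w > 0" using assms unfolding w_def by auto
  define F where "F x = arcsin ((2*x - \<sigma>)/w)" for x
  have "((\<lambda>x. 1 / sqrt ((rp - x) * (x - rm))) has_integral (F rp - F rm)) {rm..rp}"
  proof (rule fundamental_theorem_of_calculus_interior)
    show "rm \<le> rp" using assms by simp
    show "continuous_on {rm..rp} F" unfolding F_def
    proof (intro continuous_intros ballI)
      fix x assume x: "x \<in> {rm..rp}"
      show "-1 \<le> (2*x - \<sigma>)/w \<and> (2*x - \<sigma>)/w \<le> 1"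
        using x w0 unfolding w_def \<sigma>_def by (auto simp: field_simps)
    qed (use w0 in auto)
    fix x assume x: "x \<in> {rm<..<rp}"
    define u where "u = (2*x - \<sigma>)/w"
    have u: "-1 < u" "u < 1" using x w0 unfolding u_def w_def \<sigma>_def by (auto simp: field_simps)
    have P: "(rp - x) * (x - rm) > 0" using x by auto
    have e1: "w^2 - (2*x - \<sigma>)^2 = 4 * ((rp - x) * (x - rm))"
      unfolding w_def \<sigma>_def by (simp add: algebra_simps power2_eq_square)
    have u2: "u^2 = (2*x - \<sigma>)^2 / w^2" unfolding u_def by (rule power_divide)
    have "1 - u^2 = (w^2 - (2*x - \<sigma>)^2) / w^2"
      using w0 by (simp only: u2 diff_divide_distrib) simp
    then have "1 - u^2 = 4 * ((rp - x) * (x - rm)) / w^2" using e1 by simp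
    then have sq: "sqrt (1 - u^2) = 2 * sqrt ((rp - x) * (x - rm)) / w"
      using w0 by (simp add: real_sqrt_divide real_sqrt_mult)
    have "(F has_real_derivative inverse (sqrt (1 - u^2)) * (2 / w)) (at x)"
      unfolding F_def u_def
      by (rule DERIV_chain2[OF DERIV_arcsin]) (use u w0 in \<open>auto simp: u_def intro!: derivative_eq_intros\<close>)
    moreover have "inverse (sqrt (1 - u^2)) * (2 / w) = 1 / sqrt ((rp - x) * (x - rm))"
      using sq w0 P by (simp add: field_simps)
    ultimately show "(F has_vector_derivative 1 / sqrt ((rp - x) * (x - rm))) (at x)"
      by (simp add: has_real_derivative_iff_has_vector_derivative)
  qed
  moreover have "(2*rp - \<sigma>)/w = 1" "(2*rm - \<sigma>)/w = -1" using w0 unfolding w_def \<sigma>_def by (auto simp: field_simps)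
  then have "F rp - F rm = pi" unfolding F_def by simp
  ultimately show ?thesis by simp
qed

lemma period_bound:
  assumes L: "L > 0" and rm: "0 < rm" "rm < rp" "rp \<le> S"
    and Em: "Psi U0 L rm = E" and Ep: "Psi U0 L rp = E"
  shows "period_integrand U0 E L integrable_on {rm..rp} \<and> 2 * integral {rm..rp} (period_integrand U0 E L) \<le> sqrt (3 * pi / c)"
proof -
  define K where "K = 1 / sqrt (4*pi*c/3)"
  define P where "P x = (rp - x) * (x - rm)" for x
  have K0: "K > 0" unfolding K_def using c by auto
  have gi: "((\<lambda>x. K * (1 / sqrt (P x))) has_integral K * pi) {rm..rp}"
    unfolding P_def by (intro has_integral_mult_right arcsin_integral rm)
  have M: "period_integrand U0 E L \<in> borel_measurable (lebesgue_on {rm..rp})"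
  proof -
    have "Psi U0 L \<in> borel_measurable (lebesgue_on {rm..rp})"
      using rm by (intro continuous_imp_measurable_on_sets_lebesgue Psi_cont) auto
    then show ?thesis unfolding period_integrand_def[abs_def] by measurable
  qed
  have B: "\<bar>period_integrand U0 E L x\<bar> \<le> K * (1 / sqrt (P x))" if x: "x \<in> {rm..rp}" for x
  proof (cases "x = rm \<or> x = rp")
    case True
    then show ?thesis using Em Ep unfolding period_integrand_def P_def by auto
  next
    case False
    then have x': "rm < x" "x < rp" using x by auto
    have P0: "P x > 0" using x' unfolding P_def by auto
    have ineq: "E - Psi U0 L x \<ge> 2 * pi / 3 * c * ((rp - x) * (x - rm) * (x + rp + rm)) / x"
      using main_ineq[OF L rm Em Ep x] .
    have "(x + rp + rm) / x \<ge> 1" using x' rm by (simp add: field_simps)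
    then have "P x * 1 \<le> P x * ((x + rp + rm) / x)" using P0 by (intro mult_left_mono) auto
    then have h1: "P x \<le> P x * ((x + rp + rm) / x)" by simp
    have e: "(rp - x) * (x - rm) * (x + rp + rm) / x = P x * ((x + rp + rm) / x)"
      unfolding P_def by simp
    have h2: "P x \<le> (rp - x) * (x - rm) * (x + rp + rm) / x" using h1 e by linarith
    have e2: "2 * pi / 3 * c * ((rp - x) * (x - rm) * (x + rp + rm)) / x
        = 2 * pi / 3 * c * ((rp - x) * (x - rm) * (x + rp + rm) / x)" by simp
    have "2 * pi / 3 * c * P x \<le> 2 * pi / 3 * c * ((rp - x) * (x - rm) * (x + rp + rm) / x)"
      using h2 c by (intro mult_left_mono) auto
    then have "2 * pi / 3 * c * ((rp - x) * (x - rm) * (x + rp + rm)) / x \<ge> 2 * pi / 3 * c * P x"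
      using e2 by linarith
    moreover have "4 * pi * c / 3 * P x = 2 * (2 * pi / 3 * c * P x)" by simp
    ultimately have lb: "2 * E - 2 * Psi U0 L x \<ge> 4 * pi * c / 3 * P x" using ineq by linarith
    have lbp: "4 * pi * c / 3 * P x > 0" using P0 c by auto
    have "sqrt (4 * pi * c / 3 * P x) \<le> sqrt (2 * E - 2 * Psi U0 L x)" using lb by simp
    moreover have "sqrt (4 * pi * c / 3 * P x) > 0" using lbp by simp
    ultimately have "1 / sqrt (2 * E - 2 * Psi U0 L x) \<le> 1 / sqrt (4 * pi * c / 3 * P x)"
      by (intro divide_left_mono) auto
    also have "\<dots> = K * (1 / sqrt (P x))" unfolding K_def real_sqrt_mult[of "4 * pi * c / 3" "P x"] by simp
    finally show ?thesis using lb lbp unfolding period_integrand_def by simp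
  qed
  have Sl: "{rm..rp} \<in> sets lebesgue" by simp
  have int: "period_integrand U0 E L integrable_on {rm..rp}"
    by (rule measurable_bounded_by_integrable_imp_integrable_real[OF M has_integral_integrable[OF gi] B Sl])
  have "integral {rm..rp} (period_integrand U0 E L) \<le> K * pi"
    using integral_le[OF int has_integral_integrable[OF gi]] B integral_unique[OF gi] by fastforce
  moreover have "2 * (K * pi) = sqrt (3 * pi / c)"
  proof -
    have "sqrt (3 * pi / c) * sqrt (4*pi*c/3) = sqrt ((2*pi)^2)"
      using c by (simp add: real_sqrt_mult[symmetric] power2_eq_square field_simps)
    also have "\<dots> = \<bar>2 * pi\<bar>" by (rule real_sqrt_abs)
    also have "\<dots> = 2 * pi" by simp
    finally show ?thesis unfolding K_def using c by (simp add: field_simps)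
  qed
  ultimately show ?thesis using int by linarith
qed

end

theorem lemmaB2:
  fixes phi U0 rho0 :: "real \<Rightarrow> real" and E0 k S c :: real
  assumes E0: "E0 < 0"
    and ansatz: "phi = king E0 \<or> (0 < k \<and> k < 7/2 \<and> phi = polytrope_iso E0 k)"
    and steady: "isotropic_steady_state phi U0 rho0"
    and S: "S > 0" and c: "c > 0"
    and SR: "S \<le> spatial_radius rho0"
    and rho_lb: "\<forall>r\<in>{0..S}. rho0 r \<ge> c"
  shows "\<forall>(E, L) \<in> interior (OmegaEL phi U0). r_plus U0 E L \<le> S \<longrightarrow>
           (\<forall>r \<in> {r_minus U0 E L .. r_plus U0 E L}.
              E - Psi U0 L r \<ge> 2 * pi / 3 * c *
                ((r_plus U0 E L - r) * (r - r_minus U0 E L) * (r + r_plus U0 E L + r_minus U0 E L)) / r)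
           \<and> period_integrand U0 E L integrable_on {r_minus U0 E L .. r_plus U0 E L}
           \<and> period U0 E L \<le> sqrt (3 * pi / c)"
proof -
  interpret ss phi U0 rho0 E0 k S c
    using E0 ansatz steady S c rho_lb by (rule ss.intro)
  show ?thesis
  proof (intro ballI)
    fix EL assume ELi: "EL \<in> interior (OmegaEL phi U0)"
    obtain E L where ELe: "EL = (E, L)" by fastforce
    have EL: "(E, L) \<in> interior (OmegaEL phi U0)" using ELi ELe by simp
    show "case EL of (E, L) \<Rightarrow> r_plus U0 E L \<le> S \<longrightarrow>
           (\<forall>r \<in> {r_minus U0 E L .. r_plus U0 E L}.
              E - Psi U0 L r \<ge> 2 * pi / 3 * c *
                ((r_plus U0 E L - r) * (r - r_minus U0 E L) * (r + r_plus U0 E L + r_minus U0 E L)) / r)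
           \<and> period_integrand U0 E L integrable_on {r_minus U0 E L .. r_plus U0 E L}
           \<and> period U0 E L \<le> sqrt (3 * pi / c)"
      unfolding ELe prod.case
    proof (intro impI conjI)
    assume rS: "r_plus U0 E L \<le> S"
    have L: "L > 0" and EE0: "E < E0" using interior_props[OF EL] by auto
    obtain r0 where r0: "r0 > 0" "Psi U0 L r0 < E" using interior_props(3)[OF EL] by blast
    have "Psi U0 L (aL L) \<le> Psi U0 L r0"
    proof (cases "r0 = aL L")
      case False
      show ?thesis using Psi_min[OF L r0(1) False] by linarith
    qed simp
    then have Ea: "Psi U0 L (aL L) < E" using r0 by linarith
    have En: "E < 0" using EE0 E0 by linarith
    note m = r_minus[OF L Ea] and p = r_plus[OF L Ea En]
    have lt: "r_minus U0 E L < r_plus U0 E L" using m p by linarith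
    show "\<forall>r \<in> {r_minus U0 E L .. r_plus U0 E L}.
              E - Psi U0 L r \<ge> 2 * pi / 3 * c *
                ((r_plus U0 E L - r) * (r - r_minus U0 E L) * (r + r_plus U0 E L + r_minus U0 E L)) / r"
      using main_ineq[OF L m(1) lt rS m(3) p(2)] by blast
    show "period_integrand U0 E L integrable_on {r_minus U0 E L .. r_plus U0 E L}"
      using period_bound[OF L m(1) lt rS m(3) p(2)] by blast
    show "period U0 E L \<le> sqrt (3 * pi / c)"
      using period_bound[OF L m(1) lt rS m(3) p(2)] unfolding period_def by blast
  qed
  qed
qed

end
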